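(* Let $M\in M_n(\mathbb{Z})$ be a symmetric positive semidefinite matrix, and let $\lambda_1$ be its largest eigenvalue. Collapsed values are integers. (i) If $\mu\notin[-1,\lambda_1+\sqrt2]$, then $\mu$ is not a collapsed value of $M$. (ii) The value $\mu=-1$ is a collapsed value of $M$ if either two columns of $M$ are equal or $Me_i=-e_j$ for some $i\neq j$. (iii) If $M$ is positive definite or is the Laplacian of a connected graph, then no $\mu<0$ is a collapsed value of $M$. (iv) If $M$ is positive definite with smallest eigenvalue $\lambda_n>0$, and $\mu$ is a collapsed value of $M$, then $\mu\ge\lambda_n-\sqrt2$.
   Context: For $M\in M_n(\mathbb{Z})$, $\mathrm{Im}(M)$ is the $\mathbb{Z}$-span of its columns; $M$ is spread if the quotient map $\mathbb{Z}^n\to\mathbb{Z}^n/\mathrm{Im}(M)$ is injective on the standard basis $\{e_1,\dots,e_n\}$. An integer $\mu$ is a collapsed value of $M$ if $M-\mu\,\mathrm{Id}$ is not spread. The Laplacian of a graph (multiple edges allowed, no loops) is the matrix with diagonal entries the vertex degrees and off-diagonal $(i,j)$ entry minus the number of edges joining $v_i$ and $v_j$. *)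

theory Defs
  imports "Jordan_Normal_Form.Char_Poly"
begin

definition int_image :: "int mat \<Rightarrow> int vec set" where
  "int_image M = {M *\<^sub>v v | v. v \<in> carrier_vec (dim_col M)}"

text \<open>M is spread: the quotient map Z^n -> Z^n / Im(M) is injective on the
  standard basis, i.e. e_i - e_j is not in Im(M) for i \<noteq> j.\<close>
definition spread :: "int mat \<Rightarrow> bool" where
  "spread M = (\<forall>i < dim_row M. \<forall>j < dim_row M. i \<noteq> j \<longrightarrow>
      unit_vec (dim_row M) i - unit_vec (dim_row M) j \<notin> int_image M)"

definition collapsed_value :: "int mat \<Rightarrow> int \<Rightarrow> bool" where
  "collapsed_value M \<mu> = (\<not> spread (M - of_int \<mu> \<cdot>\<^sub>m 1\<^sub>m (dim_row M)))"

definition real_mat :: "int mat \<Rightarrow> real mat" where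
  "real_mat M = map_mat real_of_int M"

definition pos_semidef :: "real mat \<Rightarrow> bool" where
  "pos_semidef A = (\<forall>x \<in> carrier_vec (dim_row A). x \<bullet> (A *\<^sub>v x) \<ge> 0)"

definition pos_def :: "real mat \<Rightarrow> bool" where
  "pos_def A = (\<forall>x \<in> carrier_vec (dim_row A). x \<noteq> 0\<^sub>v (dim_row A) \<longrightarrow> x \<bullet> (A *\<^sub>v x) > 0)"

definition largest_eigenvalue :: "real mat \<Rightarrow> real \<Rightarrow> bool" where
  "largest_eigenvalue A l = (eigenvalue A l \<and> (\<forall>k. eigenvalue A k \<longrightarrow> k \<le> l))"

definition smallest_eigenvalue :: "real mat \<Rightarrow> real \<Rightarrow> bool" where
  "smallest_eigenvalue A l = (eigenvalue A l \<and> (\<forall>k. eigenvalue A k \<longrightarrow> l \<le> k))"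

text \<open>M (n x n) is the Laplacian of a connected multigraph without loops on
  vertices 0..n-1, with edge multiplicities w i j.\<close>
definition laplacian_of_connected_graph :: "int mat \<Rightarrow> bool" where
  "laplacian_of_connected_graph M = (\<exists>w :: nat \<Rightarrow> nat \<Rightarrow> nat.
     M \<in> carrier_mat (dim_row M) (dim_row M) \<and>
     (\<forall>i < dim_row M. \<forall>j < dim_row M. w i j = w j i) \<and>
     (\<forall>i < dim_row M. w i i = 0) \<and>
     (\<forall>i < dim_row M. \<forall>j < dim_row M. i \<noteq> j \<longrightarrow> M $$ (i, j) = - int (w i j)) \<and>
     (\<forall>i < dim_row M. M $$ (i, i) = int (\<Sum>j \<in> {0..<dim_row M}. w i j)) \<and>
     (\<forall>i < dim_row M. \<forall>j < dim_row M.
        (i, j) \<in> {(a, b). a < dim_row M \<and> b < dim_row M \<and> w a b > 0}\<^sup>*))"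

end

theory Submission
  imports Defs "HOL-Analysis.Analysis"
begin
definition qf :: "'a::comm_ring_1 mat \<Rightarrow> nat \<Rightarrow> (nat \<Rightarrow> 'a) \<Rightarrow> 'a" where
  "qf A n x = (\<Sum>i<n. \<Sum>j<n. A $$ (i,j) * x i * x j)"
definition nf :: "nat \<Rightarrow> (nat \<Rightarrow> 'a::comm_ring_1) \<Rightarrow> 'a" where
  "nf n x = (\<Sum>i<n. (x i)^2)"

lemma compactK: "compact (PiE UNIV (\<lambda>i. {-1..1::real}) \<inter> {x. nf n x = (1::real)})"
proof (rule compact_Int_closed)
  show "compact (PiE UNIV (\<lambda>i. {-1..1::real}))"
  proof -
    have "compactin (product_topology (\<lambda>i. euclidean) UNIV) (PiE UNIV (\<lambda>i. {-1..1::real}))"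
      by (simp add: compactin_PiE)
    then show ?thesis by (simp add: euclidean_product_topology compactin_euclidean_iff)
  qed
  have c: "continuous_on UNIV (nf n :: (nat \<Rightarrow> real) \<Rightarrow> real)" unfolding nf_def
    by (intro continuous_intros continuous_on_product_coordinates)
  show "closed {x. nf n x = (1::real)}"
    using closed_Collect_eq[OF c continuous_on_const, of 1] by simp
qed

lemma contQ: "continuous_on S (qf (A::real mat) n)"
  unfolding qf_def
  by (intro continuous_intros continuous_on_subset[OF continuous_on_product_coordinates]) auto

lemma qf_cong: "(\<And>i. i < n \<Longrightarrow> x i = y i) \<Longrightarrow> qf A n x = qf A n y"
  unfolding qf_def by (intro sum.cong) auto
lemma nf_cong: "(\<And>i. i < n \<Longrightarrow> x i = y i) \<Longrightarrow> nf n x = nf n y"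
  unfolding nf_def by (intro sum.cong) auto
lemma qf_scale: "qf A n (\<lambda>i. c * x i) = c^2 * qf A n x"
  unfolding qf_def by (simp add: sum_distrib_left power2_eq_square algebra_simps)
lemma nf_scale: "nf n (\<lambda>i. c * x i) = c^2 * nf n x"
  unfolding nf_def by (simp add: sum_distrib_left power2_eq_square algebra_simps)
lemma nf_nonneg: "nf n x \<ge> (0::real)"
  unfolding nf_def by (intro sum_nonneg) auto
lemma nf_zero: "nf n x = (0::real) \<Longrightarrow> i < n \<Longrightarrow> x i = 0"
  unfolding nf_def using sum_nonneg_eq_0_iff[of "{..<n}" "\<lambda>i. (x i)^2"] by auto
lemma nf_ge: "i < n \<Longrightarrow> (x i)^2 \<le> (nf n x::real)"
  unfolding nf_def by (rule member_le_sum) auto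
lemma nf_add: "nf n (\<lambda>i. x i + t * y i) = ( nf n x + 2*t*(\<Sum>i<n. y i * x i) + t^2 * nf n y :: real)"
  unfolding nf_def by (simp add: sum_distrib_left sum.distrib power2_eq_square algebra_simps)
lemma qf_add:
  fixes A :: "real mat"
  assumes sym: "\<And>i j. i < n \<Longrightarrow> j < n \<Longrightarrow> A $$ (i,j) = A $$ (j,i)"
  shows "qf A n (\<lambda>i. x i + t * y i) = qf A n x + 2*t*(\<Sum>i<n. y i * (\<Sum>j<n. A $$ (i,j) * x j)) + t^2 * qf A n y"
proof -
  have sw: "(\<Sum>i<n. \<Sum>j<n. A $$ (i,j) * x i * y j) = (\<Sum>i<n. \<Sum>j<n. A $$ (i,j) * y i * x j)"
    apply (subst sum.swap)
    apply (intro sum.cong refl)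
    using sym by (auto simp: mult.commute mult.left_commute)
  have "qf A n (\<lambda>i. x i + t * y i) = (\<Sum>i<n. \<Sum>j<n. A $$ (i,j) * x i * x j + t * (A $$ (i,j) * x i * y j) + t * (A $$ (i,j) * y i * x j) + t^2 * (A $$ (i,j) * y i * y j))"
    unfolding qf_def by (intro sum.cong refl) (simp add: power2_eq_square algebra_simps)
  also have "\<dots> = qf A n x + t * (\<Sum>i<n. \<Sum>j<n. A $$ (i,j) * x i * y j) + t * (\<Sum>i<n. \<Sum>j<n. A $$ (i,j) * y i * x j) + t^2 * qf A n y"
    unfolding qf_def by (simp add: sum.distrib sum_distrib_left)
  also have "\<dots> = qf A n x + 2*t*(\<Sum>i<n. \<Sum>j<n. A $$ (i,j) * y i * x j) + t^2 * qf A n y"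
    using sw by simp
  also have "(\<Sum>i<n. \<Sum>j<n. A $$ (i,j) * y i * x j) = (\<Sum>i<n. y i * (\<Sum>j<n. A $$ (i,j) * x j))"
    by (simp add: sum_distrib_left algebra_simps)
  finally show ?thesis .
qed

lemma quad_trick:
  fixes S g :: real
  assumes "\<And>t. t > 0 \<Longrightarrow> 2*t*S + t^2*g \<le> 0"
  shows "S \<le> 0"
proof (rule ccontr)
  assume "\<not> S \<le> 0"
  hence S: "S > 0" by simp
  define t where "t = S / (\<bar>g\<bar> + 1)"
  have t: "t > 0" unfolding t_def using S by auto
  have "2*t*S + t^2*g \<le> 0" using assms t by auto
  hence "t * (2*S + t*g) \<le> 0" by (simp add: power2_eq_square algebra_simps)
  hence a: "2*S + t*g \<le> 0" using t by (simp add: mult_le_0_iff)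
  have "t * \<bar>g\<bar> \<le> S" unfolding t_def using S
    by (simp add: divide_le_eq field_simps)
  moreover have "- (t * \<bar>g\<bar>) \<le> t*g" using t by (simp add: abs_if)
  ultimately show False using a S by linarith
qed

lemma top_fun:
  fixes A :: "real mat"
  assumes sym: "\<And>i j. i < n \<Longrightarrow> j < n \<Longrightarrow> A $$ (i,j) = A $$ (j,i)" and n: "n > 0"
  shows "\<exists>m x0. nf n x0 = 1 \<and> (\<forall>i<n. (\<Sum>j<n. A $$ (i,j) * x0 j) = m * x0 i) \<and> (\<forall>x. qf A n x \<le> m * nf n x)"
proof -
  define K where "K = PiE UNIV (\<lambda>i. {-1..1::real}) \<inter> {x. nf n x = 1}"
  have cK: "compact K" unfolding K_def by (rule compactK)
  have "(\<lambda>i. if i = 0 then 1 else 0::real) \<in> K"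
  proof -
    have "nf n (\<lambda>i. if i = 0 then 1 else 0::real) = 1"
    proof -
      have "(\<Sum>i<n. (if i = 0 then 1 else 0::real)^2) = (\<Sum>i<n. if i = 0 then 1 else 0)"
        by (rule sum.cong) auto
      then show ?thesis unfolding nf_def using n by simp
    qed
    then show ?thesis unfolding K_def by auto
  qed
  hence neK: "K \<noteq> {}" by auto
  obtain x0 where x0K: "x0 \<in> K" and x0max: "\<And>y. y \<in> K \<Longrightarrow> qf A n y \<le> qf A n x0"
    using continuous_attains_sup[OF cK neK contQ] by blast
  define m where "m = qf A n x0"
  have nx0: "nf n x0 = 1" using x0K unfolding K_def by auto
  have le: "qf A n x \<le> m * nf n x" for x
  proof (cases "nf n x = 0")
    case True
    have "qf A n x = qf A n (\<lambda>i. 0)" using nf_zero[OF True] by (intro qf_cong) auto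
    also have "\<dots> = 0" unfolding qf_def by simp
    finally show ?thesis using True by simp
  next
    case False
    hence pos: "nf n x > 0" using nf_nonneg[of n x] by simp
    define c where "c = 1 / sqrt (nf n x)"
    define y where "y = (\<lambda>i. if i < n then c * x i else 0)"
    have c2: "c^2 * nf n x = 1" unfolding c_def using pos by (simp add: power_divide)
    have ny: "nf n y = 1" using c2 nf_scale[of n c x] nf_cong[of n y "\<lambda>i. c * x i"]
      unfolding y_def by auto
    have yb: "y i \<in> {-1..1}" for i
    proof (cases "i < n")
      case True
      have "(y i)^2 \<le> 1" using nf_ge[OF True, of y] ny by simp
      then have "\<bar>y i\<bar> \<le> 1" using abs_square_le_1 by blast
      then show ?thesis by (simp add: abs_le_iff)
    qed (auto simp: y_def)
    have "y \<in> K" using yb ny unfolding K_def by (auto simp: PiE_iff)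
    hence "qf A n y \<le> m" using x0max unfolding m_def by auto
    moreover have "qf A n y = c^2 * qf A n x" using qf_scale[of A n c x] qf_cong[of n y "\<lambda>i. c * x i"]
      unfolding y_def by auto
    ultimately have "c^2 * qf A n x \<le> c^2 * (m * nf n x)" using c2 by (simp add: algebra_simps)
    moreover have "c^2 > 0" unfolding c_def using pos by simp
    ultimately show ?thesis by simp
  qed
  define b where "b = (\<lambda>i. (\<Sum>j<n. A $$ (i,j) * x0 j) - m * x0 i)"
  have "(\<Sum>i<n. b i * b i) \<le> 0"
  proof (rule quad_trick[where g = "qf A n b - m * nf n b"])
    fix t :: real assume "t > 0"
    have "qf A n (\<lambda>i. x0 i + t * b i) - m * nf n (\<lambda>i. x0 i + t * b i) \<le> 0" using le by simp
    moreover have "qf A n (\<lambda>i. x0 i + t * b i) - m * nf n (\<lambda>i. x0 i + t * b i)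
       = (qf A n x0 - m * nf n x0) + 2*t*(\<Sum>i<n. b i * b i) + t^2 * (qf A n b - m * nf n b)"
    proof -
      have e: "(\<Sum>i<n. b i * (\<Sum>j<n. A $$ (i,j) * x0 j)) - m * (\<Sum>i<n. b i * x0 i) = (\<Sum>i<n. b i * ((\<Sum>j<n. A $$ (i,j) * x0 j) - m * x0 i))"
        by (simp add: sum_subtractf sum_distrib_left algebra_simps)
      also have "\<dots> = (\<Sum>i<n. b i * b i)" by (intro sum.cong refl) (simp add: b_def)
      finally have e2: "(\<Sum>i<n. b i * (\<Sum>j<n. A $$ (i,j) * x0 j)) - m * (\<Sum>i<n. b i * x0 i) = (\<Sum>i<n. b i * b i)" .
      have q: "qf A n (\<lambda>i. x0 i + t * b i) = qf A n x0 + 2*t*(\<Sum>i<n. b i * (\<Sum>j<n. A $$ (i,j) * x0 j)) + t^2 * qf A n b"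
        by (rule qf_add[OF sym])
      have nn: "nf n (\<lambda>i. x0 i + t * b i) = nf n x0 + 2*t*(\<Sum>i<n. b i * x0 i) + t^2 * nf n b"
        by (rule nf_add)
      show ?thesis unfolding q nn e2[symmetric] by (simp add: algebra_simps)
    qed
    moreover have "qf A n x0 - m * nf n x0 = 0" unfolding m_def nx0 by simp
    ultimately show "2*t*(\<Sum>i<n. b i * b i) + t^2 * (qf A n b - m * nf n b) \<le> 0" by simp
  qed
  hence "\<forall>i\<in>{..<n}. b i * b i = 0"
    using sum_nonneg_eq_0_iff[of "{..<n}" "\<lambda>i. b i * b i"] by (simp add: antisym sum_nonneg)
  hence "\<forall>i<n. (\<Sum>j<n. A $$ (i,j) * x0 j) = m * x0 i" unfolding b_def by auto
  then show ?thesis using nx0 le by blast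
qed

lemma mv_idx: "A \<in> carrier_mat n n \<Longrightarrow> x \<in> carrier_vec n \<Longrightarrow> i < n \<Longrightarrow>
   (A *\<^sub>v x) $ i = (\<Sum>j<n. A $$ (i,j) * x $ j)"
  by (auto simp: scalar_prod_def lessThan_atLeast0 intro!: sum.cong)

lemma qf_vec: "A \<in> carrier_mat n n \<Longrightarrow> x \<in> carrier_vec n \<Longrightarrow> x \<bullet> (A *\<^sub>v x) = qf A n (\<lambda>i. x $ i)"
  unfolding qf_def
  by (auto simp: scalar_prod_def mv_idx lessThan_atLeast0[symmetric] sum_distrib_left algebra_simps intro!: sum.cong)

lemma nf_vec: "x \<in> carrier_vec n \<Longrightarrow> x \<bullet> x = nf n (\<lambda>i. x $ i)"
  unfolding nf_def by (auto simp: scalar_prod_def lessThan_atLeast0 power2_eq_square)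

lemma idx_shift: fixes M :: "'a::comm_ring_1 mat" shows "M \<in> carrier_mat n n \<Longrightarrow> v \<in> carrier_vec n \<Longrightarrow> k < n \<Longrightarrow>
   ((M - c \<cdot>\<^sub>m 1\<^sub>m n) *\<^sub>v v) $ k = (M *\<^sub>v v) $ k - c * v $ k"
proof -
  assume M: "M \<in> carrier_mat n n" and v: "v \<in> carrier_vec n" and k: "k < n"
  have "((M - c \<cdot>\<^sub>m 1\<^sub>m n) *\<^sub>v v) $ k = (\<Sum>j<n. (M $$ (k,j) - c * (if k = j then 1 else 0)) * v $ j)"
    using M v k by (subst mv_idx[of _ n]) (auto intro!: sum.cong)
  also have "\<dots> = (\<Sum>j<n. M $$ (k,j) * v $ j - (if k = j then c * v $ j else 0))"
    by (intro sum.cong) (auto simp: algebra_simps)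
  also have "\<dots> = (\<Sum>j<n. M $$ (k,j) * v $ j) - (\<Sum>j<n. (if k = j then c * v $ j else 0))"
    by (simp add: sum_subtractf)
  also have "\<dots> = (M *\<^sub>v v) $ k - c * v $ k" using M v k by (simp add: mv_idx[OF M v k] sum.delta)
  finally show ?thesis .
qed

lemma eig_from_fun:
  fixes A :: "real mat"
  assumes A: "A \<in> carrier_mat n n" and nx: "nf n x0 = 1"
    and ev: "\<forall>i<n. (\<Sum>j<n. A $$ (i,j) * x0 j) = m * x0 i"
  shows "eigenvalue A m"
proof -
  define v where "v = Matrix.vec n x0"
  have v: "v \<in> carrier_vec n" unfolding v_def by simp
  have "v \<noteq> 0\<^sub>v n"
  proof
    assume "v = 0\<^sub>v n"
    hence "\<forall>i<n. x0 i = 0" unfolding v_def by (metis index_vec index_zero_vec(1))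
    hence "nf n x0 = 0" unfolding nf_def by simp
    with nx show False by simp
  qed
  moreover have "A *\<^sub>v v = m \<cdot>\<^sub>v v"
  proof (rule eq_vecI)
    fix i assume "i < dim_vec (m \<cdot>\<^sub>v v)"
    hence i: "i < n" using v by simp
    have "(A *\<^sub>v v) $ i = (\<Sum>j<n. A $$ (i,j) * v $ j)" by (rule mv_idx[OF A v i])
    also have "\<dots> = (\<Sum>j<n. A $$ (i,j) * x0 j)" by (intro sum.cong) (auto simp: v_def)
    also have "\<dots> = m * x0 i" using ev i by simp
    finally show "(A *\<^sub>v v) $ i = (m \<cdot>\<^sub>v v) $ i" using i v_def by simp
  qed (use A v in auto)
  ultimately show ?thesis unfolding eigenvalue_def eigenvector_def using A v by auto
qed

lemma top_jnf:
  fixes A :: "real mat"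
  assumes A: "A \<in> carrier_mat n n" and sym: "\<And>i j. i < n \<Longrightarrow> j < n \<Longrightarrow> A $$ (i,j) = A $$ (j,i)" and n: "n > 0"
  shows "\<exists>m. eigenvalue A m \<and> (\<forall>x. qf A n x \<le> m * nf n x)"
  using top_fun[OF sym n] eig_from_fun[OF A] by blast

lemma bot_jnf:
  fixes A :: "real mat"
  assumes A: "A \<in> carrier_mat n n" and sym: "\<And>i j. i < n \<Longrightarrow> j < n \<Longrightarrow> A $$ (i,j) = A $$ (j,i)" and n: "n > 0"
  shows "\<exists>m. eigenvalue A m \<and> (\<forall>x. m * nf n x \<le> qf A n x)"
proof -
  define B where "B = map_mat uminus A"
  have B: "B \<in> carrier_mat n n" using A unfolding B_def by simp
  have Bij: "B $$ (i,j) = - A $$ (i,j)" if "i < n" "j < n" for i j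
    using A that unfolding B_def by simp
  have symB: "B $$ (i,j) = B $$ (j,i)" if "i < n" "j < n" for i j
    using Bij sym that by simp
  obtain m x0 where nx: "nf n x0 = 1" and ev: "\<forall>i<n. (\<Sum>j<n. B $$ (i,j) * x0 j) = m * x0 i"
    and le: "\<forall>x. qf B n x \<le> m * nf n x"
    using top_fun[OF symB n] by blast
  have ev': "\<forall>i<n. (\<Sum>j<n. A $$ (i,j) * x0 j) = (-m) * x0 i"
  proof (intro allI impI)
    fix i assume i: "i < n"
    have "(\<Sum>j<n. B $$ (i,j) * x0 j) = - (\<Sum>j<n. A $$ (i,j) * x0 j)"
      by (simp add: Bij i sum_negf[symmetric])
    then show "(\<Sum>j<n. A $$ (i,j) * x0 j) = (-m) * x0 i" using ev i by simp
  qed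
  have "qf B n x = - qf A n x" for x
    unfolding qf_def by (simp add: Bij sum_negf[symmetric])
  hence "\<forall>x. (-m) * nf n x \<le> qf A n x" using le by (metis minus_le_iff mult_minus_left)
  with eig_from_fun[OF A nx ev'] show ?thesis by blast
qed

lemma psd_zero:
  fixes A :: "real mat"
  assumes sym: "\<And>i j. i < n \<Longrightarrow> j < n \<Longrightarrow> A $$ (i,j) = A $$ (j,i)"
    and psd: "\<And>x. qf A n x \<ge> 0" and z: "qf A n x0 = 0"
  shows "\<forall>i<n. (\<Sum>j<n. A $$ (i,j) * x0 j) = 0"
proof -
  define b where "b = (\<lambda>i. - (\<Sum>j<n. A $$ (i,j) * x0 j))"
  have "(\<Sum>i<n. b i * b i) \<le> 0"
  proof (rule quad_trick[where g = "- qf A n b"])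
    fix t :: real assume "t > 0"
    have "qf A n (\<lambda>i. x0 i + t * b i) \<ge> 0" using psd by simp
    moreover have "qf A n (\<lambda>i. x0 i + t * b i) = qf A n x0 + 2*t*(\<Sum>i<n. b i * (\<Sum>j<n. A $$ (i,j) * x0 j)) + t^2 * qf A n b"
      by (rule qf_add[OF sym])
    moreover have "(\<Sum>i<n. b i * (\<Sum>j<n. A $$ (i,j) * x0 j)) = (\<Sum>i<n. - (b i * b i))"
      by (intro sum.cong) (auto simp: b_def)
    moreover have "(\<Sum>i<n. - (b i * b i)) = - (\<Sum>i<n. b i * b i)" by (simp add: sum_negf)
    ultimately show "2*t*(\<Sum>i<n. b i * b i) + t^2 * (- qf A n b) \<le> 0" using z by simp
  qed
  hence "\<forall>i\<in>{..<n}. b i * b i = 0"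
    using sum_nonneg_eq_0_iff[of "{..<n}" "\<lambda>i. b i * b i"] by (simp add: antisym sum_nonneg)
  thus ?thesis unfolding b_def by auto
qed

lemma qf_fun_vec: "A \<in> carrier_mat n n \<Longrightarrow> qf A n f = Matrix.vec n f \<bullet> (A *\<^sub>v Matrix.vec n f)"
  by (subst qf_vec[of A n]) (auto intro!: qf_cong)

lemma witness:
  fixes M :: "int mat"
  assumes M: "M \<in> carrier_mat n n" and c: "collapsed_value M \<mu>"
  shows "\<exists>i j v. i < n \<and> j < n \<and> i \<noteq> j \<and> v \<in> carrier_vec n \<and>
     (M - \<mu> \<cdot>\<^sub>m 1\<^sub>m n) *\<^sub>v v = unit_vec n i - unit_vec n j"
  using c M unfolding collapsed_value_def spread_def int_image_def by (auto; metis)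

lemma int_facts:
  fixes M :: "int mat"
  assumes M: "M \<in> carrier_mat n n" and v: "v \<in> carrier_vec n" and i: "i < n" and j: "j < n" and ij: "i \<noteq> j"
    and eq: "(M - \<mu> \<cdot>\<^sub>m 1\<^sub>m n) *\<^sub>v v = unit_vec n i - unit_vec n j"
  shows "qf M n (\<lambda>k. v $ k) - \<mu> * nf n (\<lambda>k. v $ k) = v $ i - v $ j"
    and "nf n (\<lambda>k. v $ k) \<ge> 1"
    and "\<bar>v $ i - v $ j\<bar> \<le> nf n (\<lambda>k. v $ k)"
    and "\<And>k. k < n \<Longrightarrow> (M *\<^sub>v v) $ k - \<mu> * v $ k = (if k = i then 1 else 0) - (if k = j then 1 else 0)"
proof -
  show comp: "(M *\<^sub>v v) $ k - \<mu> * v $ k = (if k = i then 1 else 0) - (if k = j then 1 else 0)" if k: "k < n" for k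
  proof -
    have "((M - \<mu> \<cdot>\<^sub>m 1\<^sub>m n) *\<^sub>v v) $ k = (unit_vec n i - unit_vec n j) $ k" using eq by simp
    then show ?thesis using idx_shift[OF M v k, of \<mu>] k i j by simp
  qed
  have "qf M n (\<lambda>k. v $ k) = v \<bullet> (M *\<^sub>v v)" using qf_vec[OF M v] by simp
  also have "\<dots> = (\<Sum>k<n. v $ k * (M *\<^sub>v v) $ k)" unfolding scalar_prod_def using M
    by (simp add: lessThan_atLeast0 del: index_mult_mat_vec)
  finally have q: "qf M n (\<lambda>k. v $ k) = (\<Sum>k<n. v $ k * (M *\<^sub>v v) $ k)" .
  have "qf M n (\<lambda>k. v $ k) - \<mu> * nf n (\<lambda>k. v $ k) = (\<Sum>k<n. v $ k * ((M *\<^sub>v v) $ k - \<mu> * v $ k))"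
    unfolding q nf_def by (simp add: sum_subtractf sum_distrib_left power2_eq_square algebra_simps)
  also have "\<dots> = (\<Sum>k<n. (if k = i then v $ k else 0) - (if k = j then v $ k else 0))"
    by (intro sum.cong) (auto simp: comp)
  also have "\<dots> = v $ i - v $ j" using i j by (simp add: sum_subtractf sum.delta')
  finally show "qf M n (\<lambda>k. v $ k) - \<mu> * nf n (\<lambda>k. v $ k) = v $ i - v $ j" .
  have ge: "(v $ k)^2 \<le> nf n (\<lambda>k. v $ k)" if "k < n" for k
    unfolding nf_def by (rule member_le_sum) (use that in auto)
  show "nf n (\<lambda>k. v $ k) \<ge> 1"
  proof (cases "\<exists>k<n. v $ k \<noteq> 0")
    case True
    then obtain k where k: "k < n" "v $ k \<noteq> 0" by auto
    have "(v $ k)^2 \<ge> 1" using k(2) by (smt (verit) power2_less_eq_zero_iff zero_less_power2 int_one_le_iff_zero_less)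
    then show ?thesis using ge[OF k(1)] by simp
  next
    case False
    have "(M *\<^sub>v v) $ i = 0" using False mv_idx[OF M v i] by simp
    then have "(M *\<^sub>v v) $ i - \<mu> * v $ i = 0" using False i by simp
    then show ?thesis using comp[OF i] ij by simp
  qed
  have "(v $ i)^2 + (v $ j)^2 = (\<Sum>k\<in>{i,j}. (v $ k)^2)" using ij by simp
  also have "\<dots> \<le> nf n (\<lambda>k. v $ k)" unfolding nf_def
    by (rule sum_mono2) (use i j in auto)
  finally have s: "(v $ i)^2 + (v $ j)^2 \<le> nf n (\<lambda>k. v $ k)" .
  have a: "\<bar>x\<bar> \<le> x^2" for x :: int
  proof (cases "x = 0")
    case False
    then have "\<bar>x\<bar> \<ge> 1" by simp
    then have "\<bar>x\<bar> * 1 \<le> \<bar>x\<bar> * \<bar>x\<bar>" by (intro mult_left_mono) auto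
    then show ?thesis by (simp add: power2_eq_square abs_mult_self_eq)
  qed simp
  show "\<bar>v $ i - v $ j\<bar> \<le> nf n (\<lambda>k. v $ k)" using a[of "v $ i"] a[of "v $ j"] s by linarith
qed

lemma qf_real: "M \<in> carrier_mat n n \<Longrightarrow> qf (real_mat M) n (\<lambda>k. real_of_int (f k)) = real_of_int (qf M n f)"
  unfolding qf_def real_mat_def by (auto simp: of_int_sum intro!: sum.cong)

lemma nf_real: "nf n (\<lambda>k. real_of_int (f k)) = real_of_int (nf n f)"
  unfolding nf_def by (simp add: of_int_sum)

lemma psd_int:
  assumes M: "M \<in> carrier_mat n n" and p: "pos_semidef (real_mat M)"
  shows "qf (real_mat M) n f \<ge> 0"
proof -
  have A: "real_mat M \<in> carrier_mat n n" using M unfolding real_mat_def by simp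
  show ?thesis using p A unfolding pos_semidef_def qf_fun_vec[OF A] by simp
qed

lemma pd_int:
  assumes M: "M \<in> carrier_mat n n" and p: "pos_def (real_mat M)" and v: "v \<in> carrier_vec n"
    and nz: "nf n (\<lambda>k. v $ k) \<ge> 1"
  shows "qf M n (\<lambda>k. v $ k) \<ge> 1"
proof -
  have A: "real_mat M \<in> carrier_mat n n" using M unfolding real_mat_def by simp
  define V where "V = Matrix.vec n (\<lambda>k. real_of_int (v $ k))"
  have V: "V \<in> carrier_vec n" unfolding V_def by simp
  have "V \<noteq> 0\<^sub>v n"
  proof
    assume "V = 0\<^sub>v n"
    hence "\<forall>k<n. v $ k = 0" unfolding V_def by (metis index_vec index_zero_vec(1) of_int_eq_0_iff)
    hence "nf n (\<lambda>k. v $ k) = 0" unfolding nf_def by simp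
    with nz show False by simp
  qed
  hence "V \<bullet> (real_mat M *\<^sub>v V) > 0" using p A V unfolding pos_def_def by auto
  moreover have "V \<bullet> (real_mat M *\<^sub>v V) = real_of_int (qf M n (\<lambda>k. v $ k))"
    unfolding V_def qf_fun_vec[OF A, symmetric] qf_real[OF M] by simp
  ultimately show ?thesis by simp
qed

lemma sym_real:
  assumes M: "M \<in> carrier_mat n n" and t: "transpose_mat M = M" and i: "i < n" and j: "j < n"
  shows "real_mat M $$ (i,j) = real_mat M $$ (j,i)"
proof -
  have "M $$ (i,j) = transpose_mat M $$ (i,j)" using t by simp
  also have "\<dots> = M $$ (j,i)" using M i j by simp
  finally show ?thesis using M i j unfolding real_mat_def by simp
qed

lemma mult_unit_idx:
  fixes M :: "'a::comm_ring_1 mat"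
  assumes M: "M \<in> carrier_mat n n" and i: "i < n" and k: "k < n"
  shows "(M *\<^sub>v unit_vec n i) $ k = M $$ (k,i)"
  using mv_idx[OF M _ k, of "unit_vec n i"] i by (simp add: sum.delta' if_distrib cong: if_cong)


lemma collapsed_intro:
  fixes M :: "int mat"
  assumes M: "M \<in> carrier_mat n n" and i: "i < n" and j: "j < n" and ij: "i \<noteq> j" and w: "w \<in> carrier_vec n"
    and c: "\<And>k. k < n \<Longrightarrow> (M *\<^sub>v w) $ k - \<mu> * w $ k = (if k = i then 1 else 0) - (if k = j then 1 else 0)"
  shows "collapsed_value M \<mu>"
proof -
  have "(M - of_int \<mu> \<cdot>\<^sub>m 1\<^sub>m n) *\<^sub>v w = unit_vec n i - unit_vec n j"
  proof (rule eq_vecI)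
    fix k assume "k < dim_vec (unit_vec n i - unit_vec n j)"
    hence k: "k < n" by simp
    show "((M - of_int \<mu> \<cdot>\<^sub>m 1\<^sub>m n) *\<^sub>v w) $ k = (unit_vec n i - unit_vec n j) $ k"
      using idx_shift[OF M w k, of \<mu>] c[OF k] k i j by simp
  qed (use M in simp)
  then show ?thesis using M i j ij w unfolding collapsed_value_def spread_def int_image_def by (auto; metis)
qed

lemma sum_diff_delta:
  fixes a :: "nat \<Rightarrow> 'a::comm_ring_1"
  assumes i: "i < n" and j: "j < n"
  shows "(\<Sum>l<n. a l * ((if l = i then 1 else 0) - (if l = j then 1 else 0))) = a i - a j"
proof -
  have "(\<Sum>l<n. a l * ((if l = i then 1 else 0) - (if l = j then 1 else 0)))
      = (\<Sum>l<n. (if l = i then a l else 0) - (if l = j then a l else 0))"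
    by (intro sum.cong) auto
  also have "\<dots> = a i - a j" using i j by (simp add: sum_subtractf sum.delta')
  finally show ?thesis .
qed

lemma lap_contra:
  fixes M :: "int mat"
  assumes L: "laplacian_of_connected_graph M" and M: "M \<in> carrier_mat n n"
    and i: "i < n" and j: "j < n" and ij: "i \<noteq> j" and z: "M $$ (i,i) - M $$ (i,j) = 0"
  shows False
proof -
  obtain w :: "nat \<Rightarrow> nat \<Rightarrow> nat" where
    off: "\<forall>i < n. \<forall>j < n. i \<noteq> j \<longrightarrow> M $$ (i, j) = - int (w i j)" and
    dg: "\<forall>i < n. M $$ (i, i) = int (\<Sum>j \<in> {0..<n}. w i j)" and
    con: "\<forall>i < n. \<forall>j < n. (i, j) \<in> {(a, b). a < n \<and> b < n \<and> w a b > 0}\<^sup>*"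
    using L M unfolding laplacian_of_connected_graph_def by auto
  have "int (\<Sum>l \<in> {0..<n}. w i l) + int (w i j) = 0" using z off dg i j ij by simp
  hence "(\<Sum>l \<in> {0..<n}. w i l) = 0" by linarith
  hence w0: "\<forall>l<n. w i l = 0" by simp
  have "(i, j) \<in> {(a, b). a < n \<and> b < n \<and> w a b > 0}\<^sup>*" using con i j by auto
  then show False
  proof (rule converse_rtranclE)
    assume "i = j" with ij show False by simp
  next
    fix y assume "(i, y) \<in> {(a, b). a < n \<and> b < n \<and> w a b > 0}"
    with w0 show False by auto
  qed
qed

theorem proposition3p4:
  fixes M :: "int mat" and n :: nat
  assumes "M \<in> carrier_mat n n"
    and "transpose_mat M = M"
    and "pos_semidef (real_mat M)"
  shows
    "(\<forall>lam1 \<mu>. largest_eigenvalue (real_mat M) lam1 \<longrightarrow>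
        \<not> (-1 \<le> real_of_int \<mu> \<and> real_of_int \<mu> \<le> lam1 + sqrt 2) \<longrightarrow>
        \<not> collapsed_value M \<mu>)
   \<and> (((\<exists>i < n. \<exists>j < n. i \<noteq> j \<and> col M i = col M j) \<or>
        (\<exists>i < n. \<exists>j < n. i \<noteq> j \<and> M *\<^sub>v unit_vec n i = - unit_vec n j))
       \<longrightarrow> collapsed_value M (-1))
   \<and> ((pos_def (real_mat M) \<or> laplacian_of_connected_graph M) \<longrightarrow>
        (\<forall>\<mu> < 0. \<not> collapsed_value M \<mu>))
   \<and> (\<forall>lamn \<mu>. pos_def (real_mat M) \<longrightarrow> smallest_eigenvalue (real_mat M) lamn \<longrightarrow>
        lamn > 0 \<longrightarrow> collapsed_value M \<mu> \<longrightarrow> real_of_int \<mu> \<ge> lamn - sqrt 2)"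
proof -
  note M = assms(1)
  define A where "A = real_mat M"
  have A: "A \<in> carrier_mat n n" using M unfolding A_def real_mat_def by simp
  have symA: "A $$ (i,j) = A $$ (j,i)" if "i < n" "j < n" for i j
    unfolding A_def using sym_real[OF M assms(2) that] .
  have psd: "qf M n f \<ge> 0" for f
    using psd_int[OF M assms(3), of "\<lambda>k. real_of_int (f k)"] unfolding qf_real[OF M] by simp
  have s2: "sqrt 2 \<ge> (1::real)" by simp
  have P1: "\<not> collapsed_value M \<mu>"
    if le: "largest_eigenvalue A lam1" and out: "\<not> (-1 \<le> real_of_int \<mu> \<and> real_of_int \<mu> \<le> lam1 + sqrt 2)" for lam1 \<mu>
  proof
    assume "collapsed_value M \<mu>"
    then obtain i j v where i: "i < n" and j: "j < n" and ij: "i \<noteq> j" and v: "v \<in> carrier_vec n"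
      and eq: "(M - \<mu> \<cdot>\<^sub>m 1\<^sub>m n) *\<^sub>v v = unit_vec n i - unit_vec n j"
      using witness[OF M] by blast
    define q where "q = qf M n (\<lambda>k. v $ k)"
    define N where "N = nf n (\<lambda>k. v $ k)"
    note F = int_facts[OF M v i j ij eq, folded q_def N_def]
    show False
    proof (cases "real_of_int \<mu> < -1")
      case True
      hence mu: "-\<mu> \<ge> 2" by simp
      have "(-\<mu>) * N \<ge> 2 * N" using mu F(2) by (intro mult_right_mono) auto
      moreover have "q \<ge> 0" using psd unfolding q_def by simp
      ultimately show False using F(1) F(2) F(3) by linarith
    next
      case False
      hence mu: "real_of_int \<mu> > lam1 + sqrt 2" using out by simp
      have n: "n > 0" using i by simp
      obtain m where ev: "eigenvalue A m" and ub: "\<forall>x. qf A n x \<le> m * nf n x"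
        using top_jnf[OF A symA n] by blast
      have "m \<le> lam1" using le ev unfolding largest_eigenvalue_def by blast
      have Np: "real_of_int N \<ge> 1" using F(2) by simp
      have "real_of_int q \<le> m * real_of_int N"
        using ub[rule_format, of "\<lambda>k. real_of_int (v $ k)"] unfolding A_def qf_real[OF M] nf_real q_def N_def .
      also have "\<dots> \<le> lam1 * real_of_int N" using \<open>m \<le> lam1\<close> Np by (intro mult_right_mono) auto
      finally have qb: "real_of_int q \<le> lam1 * real_of_int N" .
      have "(real_of_int \<mu> - lam1) * real_of_int N > sqrt 2 * real_of_int N"
        using mu Np by (intro mult_strict_right_mono) auto
      hence "real_of_int \<mu> * real_of_int N - lam1 * real_of_int N > sqrt 2 * real_of_int N"
        by (simp add: algebra_simps)
      moreover have "sqrt 2 * real_of_int N \<ge> real_of_int N" using s2 Np by simp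
      moreover have "real_of_int q - real_of_int \<mu> * real_of_int N = real_of_int (v $ i - v $ j)"
        using F(1) by (metis of_int_diff of_int_mult)
      moreover have "real_of_int (v $ i - v $ j) \<ge> - real_of_int N" using F(3) by linarith
      ultimately show False using qb by linarith
    qed
  qed
  have P2: "collapsed_value M (-1)"
    if h: "(\<exists>i < n. \<exists>j < n. i \<noteq> j \<and> col M i = col M j) \<or>
        (\<exists>i < n. \<exists>j < n. i \<noteq> j \<and> M *\<^sub>v unit_vec n i = - unit_vec n j)"
  proof -
    { fix i j assume i: "i < n" and j: "j < n" and ij: "i \<noteq> j" and c: "col M i = col M j"
      define w where "w = (unit_vec n i - unit_vec n j :: int Matrix.vec)"
      have w: "w \<in> carrier_vec n" unfolding w_def by simp
      have "collapsed_value M (-1)"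
      proof (rule collapsed_intro[OF M i j ij w])
        fix k assume k: "k < n"
        have wk: "w $ k = (if k = i then 1 else 0) - (if k = j then 1 else 0)" unfolding w_def using k i j by simp
        have "(M *\<^sub>v w) $ k = (\<Sum>l<n. M $$ (k,l) * ((if l = i then 1 else 0) - (if l = j then 1 else 0)))"
          unfolding mv_idx[OF M w k] by (intro sum.cong) (auto simp: w_def i j)
        also have "\<dots> = M $$ (k,i) - M $$ (k,j)" by (rule sum_diff_delta[OF i j])
        also have "\<dots> = 0"
        proof -
          have "col M i $ k = col M j $ k" using c by simp
          then show ?thesis using M k i j by simp
        qed
        finally show "(M *\<^sub>v w) $ k - (-1) * w $ k = (if k = i then 1 else 0) - (if k = j then 1 else 0)"
          using wk by simp
      qed }
    moreover
    { fix i j assume i: "i < n" and j: "j < n" and ij: "i \<noteq> j" and c: "M *\<^sub>v unit_vec n i = - unit_vec n j"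
      have w: "(unit_vec n i :: int Matrix.vec) \<in> carrier_vec n" by simp
      have "collapsed_value M (-1)"
      proof (rule collapsed_intro[OF M i j ij w])
        fix k assume k: "k < n"
        have "(M *\<^sub>v unit_vec n i) $ k = - (if k = j then 1 else 0)" unfolding c using k j by simp
        then show "(M *\<^sub>v unit_vec n i) $ k - (-1) * unit_vec n i $ k = (if k = i then 1 else 0) - (if k = j then 1 else 0)"
          using k i by simp
      qed }
    ultimately show ?thesis using h by blast
  qed
  have P3: "\<not> collapsed_value M \<mu>"
    if h: "pos_def (real_mat M) \<or> laplacian_of_connected_graph M" and mu: "\<mu> < 0" for \<mu>
  proof
    assume "collapsed_value M \<mu>"
    then obtain i j v where i: "i < n" and j: "j < n" and ij: "i \<noteq> j" and v: "v \<in> carrier_vec n"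
      and eq: "(M - \<mu> \<cdot>\<^sub>m 1\<^sub>m n) *\<^sub>v v = unit_vec n i - unit_vec n j"
      using witness[OF M] by blast
    define q where "q = qf M n (\<lambda>k. v $ k)"
    define N where "N = nf n (\<lambda>k. v $ k)"
    note F = int_facts[OF M v i j ij eq, folded q_def N_def]
    have mN: "(-\<mu>) * N \<ge> 1 * N" using mu F(2) by (intro mult_right_mono) auto
    show False
    proof (cases "pos_def (real_mat M)")
      case True
      have "q \<ge> 1" using pd_int[OF M True v] F(2) unfolding q_def N_def by simp
      then show False using F(1) F(3) mN by linarith
    next
      case False
      hence L: "laplacian_of_connected_graph M" using h by simp
      have "q \<ge> 0" using psd unfolding q_def by simp
      hence q0: "q = 0" using F(1) F(3) mN by linarith
      have z: "\<forall>k<n. (\<Sum>l<n. A $$ (k,l) * real_of_int (v $ l)) = 0"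
      proof (rule psd_zero[OF symA])
        show "\<And>x. qf A n x \<ge> 0" unfolding A_def by (rule psd_int[OF M assms(3)])
        show "qf A n (\<lambda>k. real_of_int (v $ k)) = 0" unfolding A_def qf_real[OF M] q_def[symmetric] q0 by simp
      qed
      have Mv: "(M *\<^sub>v v) $ k = 0" if k: "k < n" for k
      proof -
        have "real_of_int ((M *\<^sub>v v) $ k) = (\<Sum>l<n. A $$ (k,l) * real_of_int (v $ l))"
          unfolding mv_idx[OF M v k] A_def real_mat_def using M k by (auto simp: of_int_sum intro!: sum.cong)
        then show ?thesis using z k by simp
      qed
      have c: "(-\<mu>) * v $ k = (if k = i then 1 else 0) - (if k = j then 1 else 0)" if k: "k < n" for k
        using F(4)[OF k] Mv[OF k] by simp
      have "(-\<mu>) * v $ i = 1" using c[OF i] ij by simp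
      hence mu1: "-\<mu> = 1" using mu pos_zmult_eq_1_iff[of "-\<mu>" "v $ i"] by simp
      have vk: "v $ k = (if k = i then 1 else 0) - (if k = j then 1 else 0)" if k: "k < n" for k
        using c[OF k] mu1 by simp
      have "M $$ (i,i) - M $$ (i,j) = (\<Sum>l<n. M $$ (i,l) * ((if l = i then 1 else 0) - (if l = j then 1 else 0)))"
        by (rule sum_diff_delta[OF i j, symmetric])
      also have "\<dots> = (M *\<^sub>v v) $ i" unfolding mv_idx[OF M v i] by (intro sum.cong) (auto simp: vk)
      also have "\<dots> = 0" by (rule Mv[OF i])
      finally show False using lap_contra[OF L M i j ij] by simp
    qed
  qed
  have P4: "real_of_int \<mu> \<ge> lamn - sqrt 2"
    if sm: "smallest_eigenvalue A lamn" and c: "collapsed_value M \<mu>" for lamn \<mu>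
  proof (rule ccontr)
    assume "\<not> real_of_int \<mu> \<ge> lamn - sqrt 2"
    hence mu: "lamn - real_of_int \<mu> > sqrt 2" by simp
    obtain i j v where i: "i < n" and j: "j < n" and ij: "i \<noteq> j" and v: "v \<in> carrier_vec n"
      and eq: "(M - \<mu> \<cdot>\<^sub>m 1\<^sub>m n) *\<^sub>v v = unit_vec n i - unit_vec n j"
      using witness[OF M c] by blast
    define q where "q = qf M n (\<lambda>k. v $ k)"
    define N where "N = nf n (\<lambda>k. v $ k)"
    note F = int_facts[OF M v i j ij eq, folded q_def N_def]
    have n: "n > 0" using i by simp
    obtain m where ev: "eigenvalue A m" and lb: "\<forall>x. m * nf n x \<le> qf A n x"
      using bot_jnf[OF A symA n] by blast
    have "lamn \<le> m" using sm ev unfolding smallest_eigenvalue_def by blast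
    have Np: "real_of_int N \<ge> 1" using F(2) by simp
    have "lamn * real_of_int N \<le> m * real_of_int N" using \<open>lamn \<le> m\<close> Np by (intro mult_right_mono) auto
    also have "\<dots> \<le> real_of_int q"
      using lb[rule_format, of "\<lambda>k. real_of_int (v $ k)"] unfolding A_def qf_real[OF M] nf_real q_def N_def .
    finally have qb: "lamn * real_of_int N \<le> real_of_int q" .
    have "(lamn - real_of_int \<mu>) * real_of_int N > sqrt 2 * real_of_int N"
      using mu Np by (intro mult_strict_right_mono) auto
    hence "lamn * real_of_int N - real_of_int \<mu> * real_of_int N > sqrt 2 * real_of_int N"
      by (simp add: algebra_simps)
    moreover have "sqrt 2 * real_of_int N \<ge> real_of_int N" using s2 Np by simp
    moreover have "real_of_int q - real_of_int \<mu> * real_of_int N = real_of_int (v $ i - v $ j)"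
      using F(1) by (metis of_int_diff of_int_mult)
    moreover have "real_of_int (v $ i - v $ j) \<le> real_of_int N" using F(3) by linarith
    ultimately show False using qb by linarith
  qed
  show ?thesis using P1 P2 P3 P4 unfolding A_def by blast
qed
end
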